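(* Let $n\ge 1$ and let $\omega_1,\dots,\omega_n\in\mathbb{C}$ be pairwise distinct complex numbers, none of which lies on the real segment $[0,1]$. Let $n_1,\dots,n_n\ge 1$ be integers and set $h(\omega)=\prod_{i=1}^{n}(\omega-\omega_i)^{n_i}$. For a nonnegative integer $m$ define $$g_m(\omega)=\omega^m\Big(\log\big(1-\tfrac{1}{\omega}\big)+\sum_{k=1}^{m}\frac{1}{k\,\omega^k}\Big),\qquad G_m(\omega)=\frac{g_m(\omega)}{h(\omega)},$$ where $\log$ denotes the principal branch of the logarithm (so that $g_m$, and hence $G_m$ away from the zeros of $h$, is single-valued and holomorphic on $\mathbb{C}\setminus[0,1]$). Then $$\int_0^1 \frac{x^m}{h(x)}\,dx=\sum_{i=1}^{n}\operatorname{Res}\big(G_m,\omega_i\big).$$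
   Context: $\operatorname{Res}(G,\omega_i)$ denotes the residue of the meromorphic function $G$ at the point $\omega_i$. The empty sum (for $m=0$) is $0$. *)

theory Defs
  imports "HOL-Complex_Analysis.Complex_Analysis"
begin

definition hpoly :: "nat \<Rightarrow> (nat \<Rightarrow> complex) \<Rightarrow> (nat \<Rightarrow> nat) \<Rightarrow> complex \<Rightarrow> complex" where
  "hpoly n w k z = (\<Prod>i=1..n. (z - w i) ^ k i)"

definition gfun :: "nat \<Rightarrow> complex \<Rightarrow> complex" where
  "gfun m z = z ^ m * (Ln (1 - 1 / z) + (\<Sum>j=1..m. 1 / (of_nat j * z ^ j)))"

definition Gfun :: "nat \<Rightarrow> (nat \<Rightarrow> complex) \<Rightarrow> (nat \<Rightarrow> nat) \<Rightarrow> nat \<Rightarrow> complex \<Rightarrow> complex" where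
  "Gfun n w k m z = gfun m z / hpoly n w k z"

end

theory Submission
  imports Defs
begin




lemma seg01_iff: "(z::complex) \<in> closed_segment 0 1 \<longleftrightarrow> (\<exists>u::real. 0 \<le> u \<and> u \<le> 1 \<and> z = of_real u)"
  by (auto simp: in_segment scaleR_conv_of_real)

lemma notin_seg_Ln:
  assumes "\<omega> \<notin> closed_segment 0 (1::complex)" "z \<in> closed_segment 0 1"
  shows "1 - z / \<omega> \<notin> \<real>\<^sub>\<le>\<^sub>0"
proof
  assume a: "1 - z / \<omega> \<in> \<real>\<^sub>\<le>\<^sub>0"
  obtain u::real where u: "0 \<le> u" "u \<le> 1" "z = of_real u" using assms(2) seg01_iff by blast
  obtain t::real where t: "t \<le> 0" "1 - z/\<omega> = of_real t" using a by (auto elim!: nonpos_Reals_cases)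
  have w0: "\<omega> \<noteq> 0" using assms(1) by auto
  show False
  proof (cases "u = 0")
    case True then show False using t u by simp
  next
    case False
    have "z = (1 - of_real t) * \<omega>" using t(2) w0 by (simp add: field_simps)
    hence "\<omega> = of_real (u / (1 - t))" using u t by (simp add: field_simps)
    moreover have "0 \<le> u/(1-t)" "u/(1-t) \<le> 1" using u t by (auto simp: field_simps)
    ultimately show False using assms(1) seg01_iff by blast
  qed
qed

lemma gfun_integral:
  assumes "\<omega> \<notin> closed_segment 0 (1::complex)"
  shows "((\<lambda>z. z^m / (z - \<omega>)) has_contour_integral gfun m \<omega>) (linepath 0 1)"
proof -
  have w0: "\<omega> \<noteq> 0" using assms by auto
  define F where "F z = (\<Sum>j<m. \<omega>^(m-1-j) * z^(j+1) / of_nat (j+1)) + \<omega>^m * Ln (1 - z/\<omega>)" for z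
  have D: "(F has_field_derivative z^m / (z - \<omega>)) (at z within closed_segment 0 1)"
    if z: "z \<in> closed_segment 0 1" for z
  proof -
    have nz: "1 - z/\<omega> \<notin> \<real>\<^sub>\<le>\<^sub>0" using notin_seg_Ln[OF assms z] .
    have zw: "z \<noteq> \<omega>" using z assms by auto
    have d1: "((\<lambda>z. \<Sum>j<m. \<omega>^(m-1-j) * z^(j+1) / of_nat (j+1)) has_field_derivative (\<Sum>j<m. \<omega>^(m-1-j) * z^j)) (at z)"
    proof (rule DERIV_sum)
      fix j assume "j \<in> {..<m}"
      show "((\<lambda>z. \<omega>^(m-1-j) * z^(j+1) / of_nat (j+1)) has_field_derivative \<omega>^(m-1-j) * z^j) (at z)"
      proof -
        have nz1: "(1::complex) + of_nat j \<noteq> 0" by (metis of_nat_Suc of_nat_neq_0)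
        show ?thesis
          by (rule derivative_eq_intros refl | simp add: nz1)+
      qed
    qed
    have d2: "((\<lambda>z. \<omega>^m * Ln (1 - z/\<omega>)) has_field_derivative \<omega>^m * (inverse (1 - z/\<omega>) * (- 1/\<omega>))) (at z)"
      apply (rule DERIV_cmult)
      apply (rule DERIV_chain2[where g="\<lambda>z. 1 - z/\<omega>", OF has_field_derivative_Ln[OF nz]])
      apply (rule derivative_eq_intros refl | simp add: w0)+
      done
    have "(F has_field_derivative (\<Sum>j<m. \<omega>^(m-1-j) * z^j) + \<omega>^m * (inverse (1 - z/\<omega>) * (- 1/\<omega>))) (at z)"
      unfolding F_def by (rule DERIV_add[OF d1 d2])
    moreover have "(\<Sum>j<m. \<omega>^(m-1-j) * z^j) + \<omega>^m * (inverse (1 - z/\<omega>) * (- 1/\<omega>)) = z^m / (z - \<omega>)"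
    proof -
      have "z^m - \<omega>^m = (z - \<omega>) * (\<Sum>j<m. \<omega>^(m - Suc j) * z^j)"
        by (simp add: power_diff_sumr2 mult.commute)
      hence e1: "(\<Sum>j<m. \<omega>^(m-1-j) * z^j) = (z^m - \<omega>^m) / (z - \<omega>)"
        using zw by (simp add: field_simps)
      have e2: "\<omega>^m * (inverse (1 - z/\<omega>) * (- 1/\<omega>)) = \<omega>^m / (z - \<omega>)"
        using w0 zw by (simp add: field_simps)
      show ?thesis unfolding e1 e2 by (simp add: diff_divide_distrib)
    qed
    ultimately show ?thesis by (metis has_field_derivative_at_within)
  qed
  have "((\<lambda>z. z^m / (z - \<omega>)) has_contour_integral (F (pathfinish (linepath 0 1)) - F (pathstart (linepath 0 1)))) (linepath 0 1)"
    by (rule contour_integral_primitive[OF D]) auto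
  moreover have "F (pathfinish (linepath 0 1)) - F (pathstart (linepath 0 1)) = gfun m \<omega>"
  proof -
    have "(\<Sum>j=1..m. \<omega>^m / (of_nat j * \<omega>^j)) = (\<Sum>j<m. \<omega>^m / (of_nat (Suc j) * \<omega>^(Suc j)))"
      by (simp add: sum.atLeast1_atMost_eq)
    also have "\<dots> = (\<Sum>j<m. \<omega>^(m-1-j) / of_nat (j+1))"
    proof (rule sum.cong[OF refl])
      fix j assume "j \<in> {..<m}"
      hence "m = (m-1-j) + Suc j" by simp
      hence "\<omega>^m = \<omega>^(m-1-j) * \<omega>^(Suc j)" by (metis power_add)
      hence "\<omega>^m / (of_nat (Suc j) * \<omega>^(Suc j)) = (\<omega>^(m-1-j) * \<omega>^(Suc j)) / (of_nat (Suc j) * \<omega>^(Suc j))"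
        by simp
      also have "\<dots> = \<omega>^(m-1-j) / of_nat (Suc j)"
        by (rule mult_divide_mult_cancel_right) (use w0 in simp)
      finally show "\<omega>^m / (of_nat (Suc j) * \<omega>^(Suc j)) = \<omega>^(m-1-j) / of_nat (j+1)" by simp
    qed
    finally have "(\<Sum>j=1..m. \<omega>^m / (of_nat j * \<omega>^j)) = (\<Sum>j<m. \<omega>^(m-1-j) / of_nat (j+1))" .
    thus ?thesis unfolding F_def gfun_def by (simp add: distrib_left sum_distrib_left)
  qed
  ultimately show ?thesis by simp
qed





lemma hpoly_nz: "z \<notin> w ` {1..n} \<Longrightarrow> hpoly n w k z \<noteq> 0"
  unfolding hpoly_def by (auto simp: prod_zero_iff)

lemma hpoly_holo[holomorphic_intros]: "hpoly n w k holomorphic_on S"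
  unfolding hpoly_def by (intro holomorphic_intros)

lemma hpoly_cont[continuous_intros]:
  "continuous_on S f \<Longrightarrow> continuous_on S (\<lambda>x. hpoly n w k (f x))"
  unfolding hpoly_def by (intro continuous_intros)

lemma hpoly_lower:
  assumes "n \<ge> 1" "\<And>i. i \<in> {1..n} \<Longrightarrow> k i \<ge> 1"
    and "\<And>i. i \<in> {1..n} \<Longrightarrow> norm (x - w i) \<ge> B" "B \<ge> 1"
  shows "norm (hpoly n w k x) \<ge> B"
proof -
  have ge: "norm (x - w i) ^ k i \<ge> norm (x - w i)" if "i \<in> {1..n}" for i
  proof -
    have "norm (x - w i) \<ge> 1" using assms(3)[OF that] assms(4) by simp
    thus ?thesis using assms(2)[OF that] by (metis power_one_right power_increasing)
  qed
  have one: "1 \<in> {1..n}" using assms(1) by simp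
  have "norm (hpoly n w k x) = (\<Prod>i\<in>{1..n}. norm (x - w i) ^ k i)"
    unfolding hpoly_def by (simp add: prod_norm[symmetric] norm_power)
  also have "\<dots> = norm (x - w 1) ^ k 1 * (\<Prod>i\<in>{1..n}-{1}. norm (x - w i) ^ k i)"
    by (rule prod.remove) (use one in auto)
  also have "\<dots> \<ge> norm (x - w 1) ^ k 1 * 1"
  proof (rule mult_left_mono)
    show "1 \<le> (\<Prod>i\<in>{1..n}-{1}. norm (x - w i) ^ k i)"
    proof (rule prod_ge_1)
      fix i assume "i \<in> {1..n}-{1}"
      hence "norm (x - w i) \<ge> 1" using assms(3) assms(4) by force
      thus "1 \<le> norm (x - w i) ^ k i" by (simp add: one_le_power)
    qed
  qed simp
  finally have "norm (hpoly n w k x) \<ge> norm (x - w 1)" using ge[OF one] by simp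
  thus ?thesis using assms(3)[OF one] by simp
qed

lemma resid_sum:
  assumes n1: "n \<ge> 1" and inj: "inj_on w {1..n}" and kpos: "\<And>i. i \<in> {1..n} \<Longrightarrow> k i \<ge> 1"
    and zP: "z \<notin> w ` {1..n}"
  shows "(\<Sum>i=1..n. residue (\<lambda>\<omega>. c / ((z - \<omega>) * hpoly n w k \<omega>)) (w i)) = c / hpoly n w k z"
proof -
  define H where "H = hpoly n w k"
  define P where "P = w ` {1..n}"
  define \<phi> where "\<phi> = (\<lambda>\<omega>. c / ((z - \<omega>) * H \<omega>))"
  define pts where "pts = insert z P"
  define M where "M = norm z + 1 + (\<Sum>i=1..n. norm (w i))"
  have finP: "finite P" unfolding P_def by simp
  have s0: "(\<Sum>i=1..n. norm (w i)) \<ge> 0" by (rule sum_nonneg) simp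
  have M1: "M \<ge> 1" "M \<ge> norm z + 1" unfolding M_def using s0 norm_ge_zero[of z] by linarith+
  have Mw: "norm (w i) \<le> M" if "i \<in> {1..n}" for i
  proof -
    have "norm (w i) \<le> (\<Sum>i=1..n. norm (w i))"
      by (rule member_le_sum) (use that in auto)
    thus ?thesis unfolding M_def using norm_ge_zero[of z] by linarith
  qed
  have Mpts: "norm p \<le> M" if "p \<in> pts" for p
    using that M1 Mw unfolding pts_def P_def by auto
  define c0 where "c0 = (\<Sum>p\<in>pts. residue \<phi> p)"
  have holo: "\<phi> holomorphic_on UNIV - pts"
    unfolding \<phi>_def H_def pts_def P_def
    by (intro holomorphic_intros) (auto simp: hpoly_nz)
  have cint: "contour_integral (circlepath 0 R) \<phi> = 2 * pi * \<i> * c0" if R: "R > M" for R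
  proof -
    have img: "path_image (circlepath 0 R) \<subseteq> UNIV - pts"
      using R Mpts M1 by fastforce
    have "contour_integral (circlepath 0 R) \<phi> = 2 * pi * \<i> * (\<Sum>p\<in>pts. winding_number (circlepath 0 R) p * residue \<phi> p)"
      by (rule Residue_theorem[OF open_UNIV connected_UNIV _ holo _ _ img])
        (auto simp: pts_def finP)
    also have "(\<Sum>p\<in>pts. winding_number (circlepath 0 R) p * residue \<phi> p) = c0"
      unfolding c0_def
    proof (rule sum.cong[OF refl])
      fix p assume "p \<in> pts"
      hence "norm (p - 0) < R" using Mpts R by force
      thus "winding_number (circlepath 0 R) p * residue \<phi> p = residue \<phi> p"
        by (simp add: winding_number_circlepath)
    qed
    finally show ?thesis .
  qed
  have bnd: "norm c0 \<le> 4 * norm c / R" if R: "R \<ge> 2 * M + 1" for R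
  proof -
    have RM: "R > M" "R > 0" using R M1 by auto
    have img: "path_image (circlepath 0 R) \<subseteq> UNIV - pts"
      using RM Mpts M1 by fastforce
    have "continuous_on (UNIV - pts) \<phi>" using holo by (rule holomorphic_on_imp_continuous_on)
    hence "\<phi> contour_integrable_on circlepath 0 R"
      by (intro contour_integrable_continuous_circlepath continuous_on_subset[OF _ img])
    hence hc: "(\<phi> has_contour_integral 2 * pi * \<i> * c0) (circlepath 0 R)"
      using cint[OF RM(1)] by (metis has_contour_integral_integral)
    have pb: "norm (\<phi> x) \<le> 4 * norm c / R^2" if x: "norm (x - 0) = R" for x
    proof -
      have d1: "norm (z - x) \<ge> R/2"
        using x R M1 norm_triangle_ineq2[of x z] by (simp add: norm_minus_commute)
      have d2: "norm (x - w i) \<ge> R/2" if "i \<in> {1..n}" for i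
        using x R Mw[OF that] norm_triangle_ineq2[of x "w i"] by simp
      have hb: "norm (H x) \<ge> R/2"
        unfolding H_def by (rule hpoly_lower[OF n1 kpos d2]) (use R M1 in auto)
      have "norm (\<phi> x) = norm c / (norm (z - x) * norm (H x))"
        unfolding \<phi>_def by (simp add: norm_divide norm_mult)
      also have "\<dots> \<le> norm c / ((R/2) * (R/2))"
      proof -
        have m: "(R/2)*(R/2) \<le> norm (z - x) * norm (H x)"
          by (rule mult_mono) (use d1 hb RM in auto)
        have p: "0 < (R/2)*(R/2)" using RM by simp
        show ?thesis
          by (rule divide_left_mono[OF m norm_ge_zero]) (use m p in auto)
      qed
      also have "\<dots> = 4 * norm c / R^2" by (simp add: power2_eq_square)
      finally show ?thesis .
    qed
    have "norm (2 * pi * \<i> * c0) \<le> 4 * norm c / R^2 * (2 * pi * R)"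
      by (rule has_contour_integral_bound_circlepath[OF hc _ RM(2) pb]) auto
    hence "2 * pi * norm c0 \<le> 4 * norm c / R^2 * (2 * pi * R)"
      by (simp add: norm_mult)
    moreover have "4 * norm c / R^2 * (2 * pi * R) = (2 * pi) * (4 * norm c / R)"
      using RM by (simp add: power2_eq_square field_simps)
    ultimately have "(2 * pi) * norm c0 \<le> (2 * pi) * (4 * norm c / R)" by simp
    moreover have "(0::real) < 2 * pi" using pi_gt_zero by simp
    ultimately show ?thesis by (rule mult_left_le_imp_le)
  qed
  have c00: "c0 = 0"
  proof (rule ccontr)
    assume "c0 \<noteq> 0"
    hence pos: "norm c0 > 0" by simp
    define R where "R = 2 * M + 1 + 8 * norm c / norm c0"
    have R1: "R \<ge> 2 * M + 1" unfolding R_def using pos by simp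
    have R0: "R > 0" using R1 M1 by simp
    have "norm c0 \<le> 4 * norm c / R" by (rule bnd[OF R1])
    moreover have "4 * norm c / R < norm c0"
    proof -
      have "norm c0 * R = norm c0 * (2*M+1) + 8 * norm c" unfolding R_def using pos by (simp add: field_simps)
      moreover have "norm c0 * (2*M+1) > 0" using pos M1 by simp
      ultimately have "4 * norm c < norm c0 * R" using norm_ge_zero[of c] by linarith
      thus ?thesis using R0 by (simp add: field_simps)
    qed
    ultimately show False by simp
  qed
  have rz: "residue \<phi> z = - c / H z"
  proof -
    have "residue (\<lambda>\<omega>. (- c / H \<omega>) / (\<omega> - z)) z = - c / H z"
      by (rule residue_simple[of "- P"]) (use zP in \<open>auto simp: finP finite_imp_closed open_Compl H_def
          intro!: holomorphic_intros simp: P_def hpoly_nz\<close>)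
    moreover have "(\<lambda>\<omega>. (- c / H \<omega>) / (\<omega> - z)) = \<phi>"
    proof
      fix \<omega>
      have "(- c / H \<omega>) / (\<omega> - z) = - (c / ((\<omega> - z) * H \<omega>))"
        by (simp add: divide_divide_eq_left mult.commute)
      also have "\<dots> = c / (- ((\<omega> - z) * H \<omega>))" by (simp only: divide_minus_right)
      also have "- ((\<omega> - z) * H \<omega>) = (z - \<omega>) * H \<omega>" by (simp add: algebra_simps)
      finally show "(- c / H \<omega>) / (\<omega> - z) = \<phi> \<omega>" unfolding \<phi>_def .
    qed
    ultimately show ?thesis by simp
  qed
  have "c0 = (\<Sum>p\<in>P. residue \<phi> p) + residue \<phi> z"
    unfolding c0_def pts_def using finP zP[folded P_def] by (simp add: sum.insert)
  also have "(\<Sum>p\<in>P. residue \<phi> p) = (\<Sum>i=1..n. residue \<phi> (w i))"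
    unfolding P_def by (rule sum.reindex[OF inj, unfolded comp_def])
  finally have "(\<Sum>i=1..n. residue \<phi> (w i)) = c / H z" using c00 rz by (simp add: algebra_simps)
  thus ?thesis unfolding \<phi>_def H_def .
qed





lemma circ_int_cont:
  assumes F: "continuous_on (U \<times> sphere c r) (\<lambda>p. F (fst p) (snd p))" and r: "r \<ge> 0"
  shows "continuous_on U (\<lambda>z. contour_integral (circlepath c r) (F z))"
proof -
  have eq: "(\<lambda>z. contour_integral (circlepath c r) (F z)) =
      (\<lambda>z. integral (cbox 0 1) (\<lambda>t. F z (circlepath c r t) * (2 * complex_of_real pi * \<i> * complex_of_real r * exp (2 * complex_of_real pi * \<i> * complex_of_real t))))"
    by (simp add: contour_integral_integral vector_derivative_circlepath cbox_interval)
  have c1: "continuous_on (U \<times> cbox 0 1) (\<lambda>p. (fst p, circlepath c r (snd p)))"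
    by (simp add: circlepath) (intro continuous_intros)
  have im: "(\<lambda>p. (fst p, circlepath c r (snd p))) ` (U \<times> cbox 0 1) \<subseteq> U \<times> sphere c r"
    using r by (auto simp: circlepath dist_norm norm_mult)
  have c2: "continuous_on (U \<times> cbox 0 1) (\<lambda>p. F (fst p) (circlepath c r (snd p)))"
    using continuous_on_compose2[OF F c1 im] by simp
  have c3: "continuous_on (U \<times> cbox 0 1) (\<lambda>(z, t). F z (circlepath c r t) * (2 * complex_of_real pi * \<i> * complex_of_real r * exp (2 * complex_of_real pi * \<i> * complex_of_real t)))"
    unfolding split_def by (intro continuous_intros c2)
  show ?thesis unfolding eq by (rule integral_continuous_on_param[OF c3])
qed

lemma gfun_holo:
  assumes A: "A \<inter> closed_segment 0 1 = {}"
  shows "gfun m holomorphic_on A"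
  unfolding gfun_def
proof (intro holomorphic_intros)
  fix z assume z: "z \<in> A"
  hence zs: "z \<notin> closed_segment 0 1" using A by auto
  thus "z \<noteq> 0" by auto
  show "1 - 1/z \<notin> \<real>\<^sub>\<le>\<^sub>0" using notin_seg_Ln[OF zs, of 1] by simp
qed (use A in auto)





theorem theorem1:
  fixes n m :: nat and w :: "nat \<Rightarrow> complex" and k :: "nat \<Rightarrow> nat"
  assumes "n \<ge> 1"
    and "inj_on w {1..n}"
    and "\<And>i. i \<in> {1..n} \<Longrightarrow> w i \<notin> closed_segment 0 1"
    and "\<And>i. i \<in> {1..n} \<Longrightarrow> k i \<ge> 1"
  shows "integral {0..1} (\<lambda>x::real. (complex_of_real x) ^ m / hpoly n w k (complex_of_real x))
           = (\<Sum>i=1..n. residue (Gfun n w k m) (w i))"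
proof -
  note n1 = assms(1) and inj = assms(2) and wseg = assms(3) and kpos = assms(4)
  define seg where "seg = closed_segment 0 (1::complex)"
  define H where "H = hpoly n w k"
  define P where "P = w ` {1..n}"
  define L where "L = linepath (0::complex) 1"
  define \<psi> where "\<psi> = (\<lambda>z \<omega>. z^m / ((z - \<omega>) * hpoly n w k \<omega>))"
  have segP: "seg \<inter> P = {}" using wseg unfolding seg_def P_def by auto
  have Hnz: "H x \<noteq> 0" if "x \<notin> P" for x using that hpoly_nz unfolding H_def P_def by blast
  have "\<exists>e>0. cball (w i) e \<subseteq> - (seg \<union> w ` ({1..n} - {i}))" if i: "i \<in> {1..n}" for i
  proof -
    have o: "open (- (seg \<union> w ` ({1..n} - {i})))"
    proof (rule open_Compl, rule closed_Un)
      show "closed seg" unfolding seg_def by (rule closed_segment)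
      show "closed (w ` ({1..n} - {i}))" by (rule finite_imp_closed) simp
    qed
    have nw: "w i \<notin> w ` ({1..n} - {i})"
    proof
      assume "w i \<in> w ` ({1..n} - {i})"
      then obtain j where j: "j \<in> {1..n} - {i}" "w i = w j" by blast
      have "i = j" using inj_onD[OF inj j(2) i] j(1) by blast
      with j(1) show False by blast
    qed
    have m: "w i \<in> - (seg \<union> w ` ({1..n} - {i}))"
      using wseg[OF i] nw unfolding seg_def by blast
    show ?thesis using o m open_contains_cball by blast
  qed
  then obtain e where e: "\<And>i. i \<in> {1..n} \<Longrightarrow> e i > 0 \<and> cball (w i) (e i) \<subseteq> - (seg \<union> w ` ({1..n} - {i}))"
    by metis
  define r where "r i = e i / 2" for i
  define C where "C i = circlepath (w i) (r i)" for i
  have r0: "r i > 0" if "i \<in> {1..n}" for i using e[OF that] unfolding r_def by simp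
  have ball_ok: "x \<notin> seg \<and> x \<notin> P" if i: "i \<in> {1..n}" and x: "x \<in> ball (w i) (e i) - {w i}" for i x
  proof -
    have xc: "x \<in> cball (w i) (e i)" using x by auto
    hence "x \<notin> seg \<and> x \<notin> w ` ({1..n}-{i})" using e[OF i] by blast
    moreover have "x \<noteq> w i" using x by blast
    ultimately show ?thesis unfolding P_def by blast
  qed
  have sph: "sphere (w i) (r i) \<subseteq> ball (w i) (e i) - {w i}" if i: "i \<in> {1..n}" for i
    using r0[OF i] unfolding r_def by auto
  have pimg: "path_image (C i) = sphere (w i) (r i)" if i: "i \<in> {1..n}" for i
    using r0[OF i] unfolding C_def by simp
  have cb: "cball (w i) (r i) \<subseteq> ball (w i) (e i)" if i: "i \<in> {1..n}" for i
    using e[OF i] unfolding r_def by auto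
  have res1: "(Gfun n w k m has_contour_integral 2 * pi * \<i> * residue (Gfun n w k m) (w i)) (C i)"
    if i: "i \<in> {1..n}" for i
    unfolding C_def
  proof (rule base_residue[OF open_ball _ r0[OF i] _ cb[OF i]])
    show "w i \<in> ball (w i) (e i)" using e[OF i] by simp
    have "gfun m holomorphic_on ball (w i) (e i) - {w i}"
      by (rule gfun_holo) (use ball_ok[OF i] in \<open>unfold seg_def, blast\<close>)
    thus "Gfun n w k m holomorphic_on ball (w i) (e i) - {w i}"
      unfolding Gfun_def using ball_ok[OF i] Hnz unfolding H_def
      by (intro holomorphic_intros) auto
  qed
  have res2: "(\<psi> z has_contour_integral 2 * pi * \<i> * residue (\<psi> z) (w i)) (C i)"
    if i: "i \<in> {1..n}" and z: "z \<in> seg" for i z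
    unfolding C_def
  proof (rule base_residue[OF open_ball _ r0[OF i] _ cb[OF i]])
    show "w i \<in> ball (w i) (e i)" using e[OF i] by simp
    show "\<psi> z holomorphic_on ball (w i) (e i) - {w i}"
      unfolding \<psi>_def using ball_ok[OF i] Hnz z unfolding H_def
      by (intro holomorphic_intros) auto
  qed
  have Geq: "Gfun n w k m \<omega> = contour_integral L (\<lambda>z. \<psi> z \<omega>)"
    if i: "i \<in> {1..n}" and \<omega>: "\<omega> \<in> sphere (w i) (r i)" for i \<omega>
  proof -
    have "\<omega> \<in> ball (w i) (e i) - {w i}" using sph[OF i] \<omega> by blast
    hence o: "\<omega> \<notin> seg" "\<omega> \<notin> P" using ball_ok[OF i] by blast+
    have "((\<lambda>z. z^m / (z - \<omega>) / H \<omega>) has_contour_integral gfun m \<omega> / H \<omega>) L"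
      unfolding L_def by (rule has_contour_integral_div[OF gfun_integral]) (use o in \<open>simp add: seg_def\<close>)
    moreover have "(\<lambda>z. z^m / (z - \<omega>) / H \<omega>) = (\<lambda>z. \<psi> z \<omega>)"
      unfolding \<psi>_def H_def by (simp add: divide_divide_eq_left)
    ultimately show ?thesis unfolding Gfun_def H_def by (metis contour_integral_unique)
  qed
  have pcont: "continuous_on (seg \<times> sphere (w i) (r i)) (\<lambda>p. \<psi> (fst p) (snd p))"
    if i: "i \<in> {1..n}" for i
  proof -
    have "(fst p - snd p) * hpoly n w k (snd p) \<noteq> 0" if p: "p \<in> seg \<times> sphere (w i) (r i)" for p
    proof -
      have "snd p \<in> ball (w i) (e i) - {w i}" using p sph[OF i] by auto
      hence "snd p \<notin> seg" "snd p \<notin> P" using ball_ok[OF i] by blast+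
      moreover have "fst p \<in> seg" using p by auto
      ultimately show ?thesis using Hnz unfolding H_def by auto
    qed
    thus ?thesis unfolding \<psi>_def by (intro continuous_intros) auto
  qed
  have pcont': "continuous_on (sphere (w i) (r i) \<times> seg) (\<lambda>(\<omega>, z). \<psi> z \<omega>)"
    if i: "i \<in> {1..n}" for i
  proof -
    have "(snd p - fst p) * hpoly n w k (fst p) \<noteq> 0" if p: "p \<in> sphere (w i) (r i) \<times> seg" for p
    proof -
      have "fst p \<in> ball (w i) (e i) - {w i}" using p sph[OF i] by auto
      hence "fst p \<notin> seg" "fst p \<notin> P" using ball_ok[OF i] by blast+
      moreover have "snd p \<in> seg" using p by auto
      ultimately show ?thesis using Hnz unfolding H_def by auto
    qed
    thus ?thesis unfolding \<psi>_def split_def by (intro continuous_intros) auto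
  qed
  have swap: "2 * pi * \<i> * residue (Gfun n w k m) (w i) = contour_integral L (\<lambda>z. contour_integral (C i) (\<psi> z))"
    if i: "i \<in> {1..n}" for i
  proof -
    have "2 * pi * \<i> * residue (Gfun n w k m) (w i) = contour_integral (C i) (Gfun n w k m)"
      using res1[OF i] by (metis contour_integral_unique)
    also have "\<dots> = contour_integral (C i) (\<lambda>\<omega>. contour_integral L (\<lambda>z. \<psi> z \<omega>))"
      by (rule contour_integral_eq) (use Geq[OF i] pimg[OF i] in auto)
    also have "\<dots> = contour_integral L (\<lambda>z. contour_integral (C i) (\<lambda>\<omega>. \<psi> z \<omega>))"
    proof (rule contour_integral_swap)
      show "continuous_on (path_image (C i) \<times> path_image L) (\<lambda>(y1, y2). \<psi> y2 y1)"
        using pcont'[OF i] pimg[OF i] unfolding L_def seg_def by simp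
      show "valid_path (C i)" "valid_path L" unfolding C_def L_def by auto
      show "continuous_on {0..1} (\<lambda>t. vector_derivative (C i) (at t))"
        unfolding C_def vector_derivative_circlepath by (intro continuous_intros)
      show "continuous_on {0..1} (\<lambda>t. vector_derivative L (at t))"
        unfolding L_def by simp
    qed
    finally show ?thesis by simp
  qed
  have integ: "(\<lambda>z. contour_integral (C i) (\<psi> z)) contour_integrable_on L" if i: "i \<in> {1..n}" for i
    unfolding L_def C_def
    by (rule contour_integrable_continuous_linepath, rule circ_int_cont)
       (use pcont[OF i] r0[OF i] in \<open>auto simp: seg_def\<close>)
  have hcont: "continuous_on seg (\<lambda>z. z^m / H z)"
  proof -
    have "\<forall>z\<in>seg. hpoly n w k z \<noteq> 0" using segP Hnz unfolding H_def by blast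
    thus ?thesis unfolding H_def by (intro continuous_intros) auto
  qed
  have "2 * pi * \<i> * (\<Sum>i=1..n. residue (Gfun n w k m) (w i))
        = (\<Sum>i=1..n. contour_integral L (\<lambda>z. contour_integral (C i) (\<psi> z)))"
    unfolding sum_distrib_left by (rule sum.cong[OF refl], rule swap) simp
  also have "\<dots> = contour_integral L (\<lambda>z. \<Sum>i=1..n. contour_integral (C i) (\<psi> z))"
    by (rule contour_integral_sum[symmetric]) (auto intro: integ)
  also have "\<dots> = contour_integral L (\<lambda>z. 2 * pi * \<i> * (z^m / H z))"
  proof (rule contour_integral_eq)
    fix z assume "z \<in> path_image L"
    hence z: "z \<in> seg" unfolding L_def seg_def by simp
    have "(\<Sum>i=1..n. contour_integral (C i) (\<psi> z)) = (\<Sum>i=1..n. 2 * pi * \<i> * residue (\<psi> z) (w i))"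
      by (rule sum.cong[OF refl]) (use res2 z in \<open>auto intro: contour_integral_unique\<close>)
    also have "\<dots> = 2 * pi * \<i> * (\<Sum>i=1..n. residue (\<psi> z) (w i))" by (simp add: sum_distrib_left)
    also have "(\<Sum>i=1..n. residue (\<psi> z) (w i)) = z^m / H z"
      unfolding \<psi>_def H_def
      by (rule resid_sum[OF n1 inj kpos]) (use z segP in \<open>auto simp: P_def\<close>)
    finally show "(\<Sum>i=1..n. contour_integral (C i) (\<psi> z)) = 2 * pi * \<i> * (z^m / H z)" .
  qed
  also have "\<dots> = 2 * pi * \<i> * contour_integral L (\<lambda>z. z^m / H z)"
    by (rule contour_integral_lmul) (unfold L_def, rule contour_integrable_continuous_linepath, use hcont seg_def in simp)
  finally have eq1: "(\<Sum>i=1..n. residue (Gfun n w k m) (w i)) = contour_integral L (\<lambda>z. z^m / H z)"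
    by simp
  have "((\<lambda>z. z^m / H z) has_contour_integral contour_integral L (\<lambda>z. z^m / H z)) L"
    unfolding L_def by (rule has_contour_integral_integral, rule contour_integrable_continuous_linepath)
      (use hcont seg_def in simp)
  hence "((\<lambda>x::real. (complex_of_real x) ^ m / H (complex_of_real x)) has_integral contour_integral L (\<lambda>z. z^m / H z)) {0..1}"
    unfolding L_def has_contour_integral_linepath by (simp add: linepath_def scaleR_conv_of_real)
  hence "integral {0..1} (\<lambda>x::real. (complex_of_real x) ^ m / H (complex_of_real x)) = contour_integral L (\<lambda>z. z^m / H z)"
    by (rule integral_unique)
  thus ?thesis using eq1 unfolding H_def by simp
qed




end
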